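(* Let $E\in M_n(\mathbb{FT})$ be an idempotent of rank $n$ and let $G_E$ be the group of units $G$ of $M_n(\mathbb{T})$ satisfying $G\otimes E=E\otimes G$. Let $I_n$ be the identity of $M_n(\mathbb{T})$, let $R=\{\lambda\otimes I_n:\lambda\in\mathbb{R}\}$ and $\Sigma=\{G\in G_E: G \text{ has eigenvalue } 0\}$. Then $R$ and $\Sigma$ are subgroups of $G_E$, $R\cong\mathbb{R}$, $\Sigma$ is a finite group embeddable in the symmetric group $S_n$, and $G_E$ is the (internal) direct product $R\times\Sigma$.
   Context: $\mathbb{FT}$ is $\mathbb{R}$ with $a\oplus b=\max(a,b)$, $a\otimes b=a+b$; $\mathbb{T}=\mathbb{R}\cup\{-\infty\}$ with the obvious extensions. Matrices multiply by $(A\otimes B)_{i,j}=\bigoplus_k A_{i,k}\otimes B_{k,j}$; $M_n(\mathbb{T})$ is a monoid with identity $I_n$ having $0$ on the diagonal and $-\infty$ elsewhere; its units are the matrices with exactly one entry different from $-\infty$ in each row and column. $\lambda\otimes A$ adds $\lambda$ to each entry. A real number $\lambda$ is an eigenvalue of $G\in M_n(\mathbb{T})$ if $G\otimes x=\lambda\otimes x$ for some $x\in\mathbb{T}^n$ not all of whose entries are $-\infty$. $C(E)$ is the set of finite componentwise maxima of columns of $E$ shifted by real constants; the rank of an idempotent $E$ is the minimal cardinality of a generating set of $C(E)$. *)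

theory Defs
  imports "HOL-Library.Extended_Real" "HOL-Library.Cardinality" "HOL-Algebra.Group" "HOL-Algebra.Bij"
begin

text \<open>The tropical semiring T = R with -infinity is modelled inside ereal: an element of T is
an extended real different from +infinity.  max-plus operations are Max and +.
n x n matrices are indexed by a finite type 'n (n = CARD('n)).\<close>

type_synonym 'n tmat = "'n \<Rightarrow> 'n \<Rightarrow> ereal"
type_synonym 'n tvec = "'n \<Rightarrow> ereal"

definition tmult :: "'n::finite tmat \<Rightarrow> 'n tmat \<Rightarrow> 'n tmat" where
  "tmult A B = (\<lambda>i j. Max ((\<lambda>k. A i k + B k j) ` UNIV))"

definition tmultv :: "'n::finite tmat \<Rightarrow> 'n tvec \<Rightarrow> 'n tvec" where
  "tmultv A x = (\<lambda>i. Max ((\<lambda>k. A i k + x k) ` UNIV))"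

definition tone :: "'n tmat" where
  "tone = (\<lambda>i j. if i = j then 0 else -\<infinity>)"

definition tscal :: "real \<Rightarrow> 'n tmat \<Rightarrow> 'n tmat" where
  "tscal l A = (\<lambda>i j. ereal l + A i j)"

definition tmonoid :: "('n::finite tmat) monoid" where
  "tmonoid = \<lparr>carrier = {A. \<forall>i j. A i j \<noteq> \<infinity>}, mult = tmult, one = tone\<rparr>"

definition finite_tmat :: "'n tmat \<Rightarrow> bool" where
  "finite_tmat A \<longleftrightarrow> (\<forall>i j. \<bar>A i j\<bar> \<noteq> \<infinity>)"

definition trop_eigenvalue :: "'n::finite tmat \<Rightarrow> real \<Rightarrow> bool" where
  "trop_eigenvalue G l \<longleftrightarrow>
     (\<exists>x. (\<forall>i. x i \<noteq> \<infinity>) \<and> (\<exists>i. x i \<noteq> -\<infinity>) \<and>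
          tmultv G x = (\<lambda>i. ereal l + x i))"

definition tspan :: "'n tvec set \<Rightarrow> 'n tvec set" where
  "tspan X = {v. \<exists>S c. S \<subseteq> X \<and> finite S \<and> S \<noteq> {} \<and>
                   v = (\<lambda>i. Max ((\<lambda>x. ereal (c x) + x i) ` S))}"

definition tcolspace :: "'n tmat \<Rightarrow> 'n tvec set" where
  "tcolspace E = tspan ((\<lambda>j. (\<lambda>i. E i j)) ` UNIV)"

definition trop_rank :: "'n tmat \<Rightarrow> nat" where
  "trop_rank E = (LEAST k. \<exists>X. finite X \<and> card X = k \<and> X \<subseteq> tcolspace E \<and>
                              tspan X = tcolspace E)"

definition real_add_group :: "real monoid" where
  "real_add_group = \<lparr>carrier = UNIV, mult = (+), one = 0\<rparr>"

end

theory Submission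
  imports Defs
begin

lemma Max_single:
  fixes f :: "'n::finite \<Rightarrow> ereal"
  assumes "\<And>k. k \<noteq> kk \<Longrightarrow> f k = -\<infinity>"
  shows "Max (f ` UNIV) = f kk"
proof (rule Max_eqI)
  fix y assume "y \<in> f ` UNIV"
  then obtain k where "y = f k" by auto
  then show "y \<le> f kk" using assms by (cases "k = kk") auto
qed auto

definition monom :: "('n \<Rightarrow> 'n) \<Rightarrow> ('n \<Rightarrow> real) \<Rightarrow> 'n tmat" where
  "monom p d = (\<lambda>a b. if a = p b then ereal (d b) else -\<infinity>)"

lemma mult_mono_right:
  fixes A :: "'n::finite tmat"
  assumes "\<forall>i j. A i j \<noteq> \<infinity>"
  shows "tmult A (monom p d) a b = A a (p b) + ereal (d b)"
  unfolding tmult_def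
  apply (subst Max_single[where kk="p b"])
  using assms by (auto simp: monom_def)

lemma mult_mono_left:
  fixes A :: "'n::finite tmat"
  assumes "\<forall>i j. A i j \<noteq> \<infinity>" "inj p"
  shows "tmult (monom p d) A (p c) b = ereal (d c) + A c b"
  unfolding tmult_def
  apply (subst Max_single[where kk="c"])
  using assms by (auto simp: monom_def inj_eq)

lemma mono_mult: "tmult (monom p d) (monom q e) = monom (p \<circ> q) (\<lambda>b. d (q b) + e b)"
  apply (rule ext)+
  apply (subst mult_mono_right)
   apply (simp add: monom_def)
  apply (auto simp: monom_def)
  done


lemma Max_swap:
  fixes F :: "'a::finite \<Rightarrow> 'b::finite \<Rightarrow> ereal"
  shows "Max (range (\<lambda>k. Max (range (\<lambda>l. F k l)))) = Max (range (\<lambda>l. Max (range (\<lambda>k. F k l))))"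
proof (rule order.antisym)
  have a: "F k l \<le> Max (range (\<lambda>k. F k l))" for k l by (rule Max_ge) auto
  have b: "Max (range (\<lambda>k. F k l)) \<le> Max (range (\<lambda>l. Max (range (\<lambda>k. F k l))))" for l by (rule Max_ge) auto
  show "Max (range (\<lambda>k. Max (range (\<lambda>l. F k l)))) \<le> Max (range (\<lambda>l. Max (range (\<lambda>k. F k l))))"
    using order_trans[OF a b] by (simp add: Max_le_iff)
next
  have a: "F k l \<le> Max (range (\<lambda>l. F k l))" for k l by (rule Max_ge) auto
  have b: "Max (range (\<lambda>l. F k l)) \<le> Max (range (\<lambda>k. Max (range (\<lambda>l. F k l))))" for k by (rule Max_ge) auto
  show "Max (range (\<lambda>l. Max (range (\<lambda>k. F k l)))) \<le> Max (range (\<lambda>k. Max (range (\<lambda>l. F k l))))"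
    using order_trans[OF a b] by (simp add: Max_le_iff)
qed

lemma Max_plus_right:
  fixes c :: ereal
  shows "finite A \<Longrightarrow> A \<noteq> {} \<Longrightarrow> Max A + c = Max ((\<lambda>x. x + c) ` A)"
  by (rule mono_Max_commute) (auto intro: monoI add_right_mono)

lemma Max_plus_left:
  fixes c :: ereal
  shows "finite A \<Longrightarrow> A \<noteq> {} \<Longrightarrow> c + Max A = Max ((\<lambda>x. c + x) ` A)"
  by (rule mono_Max_commute) (auto intro: monoI add_left_mono)

lemma tmult_assoc:
  fixes A :: "'n::finite tmat"
  shows "tmult (tmult A B) C = tmult A (tmult B C)"
proof (intro ext)
  fix i j
  have "tmult (tmult A B) C i j = Max (range (\<lambda>k. Max (range (\<lambda>l. A i l + B l k + C k j))))"
    unfolding tmult_def by (subst Max_plus_right) (auto simp: image_image)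
  also have "\<dots> = Max (range (\<lambda>l. Max (range (\<lambda>k. A i l + B l k + C k j))))"
    by (rule Max_swap)
  also have "\<dots> = tmult A (tmult B C) i j"
    unfolding tmult_def by (subst Max_plus_left) (auto simp: image_image add.assoc)
  finally show "tmult (tmult A B) C i j = tmult A (tmult B C) i j" .
qed

lemma tone_monom: "tone = monom id (\<lambda>_. 0)"
  by (intro ext) (simp add: tone_def monom_def zero_ereal_def)

lemma tmult_closed:
  fixes A :: "'n::finite tmat"
  assumes "\<forall>i j. A i j \<noteq> \<infinity>" "\<forall>i j. B i j \<noteq> \<infinity>"
  shows "tmult A B i j \<noteq> \<infinity>"
proof -
  have "tmult A B i j \<in> range (\<lambda>k. A i k + B k j)"
    unfolding tmult_def by (rule Max_in) auto
  then show ?thesis using assms by auto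
qed

lemma tone_left: "\<forall>i j. A i j \<noteq> \<infinity> \<Longrightarrow> tmult tone A = (A :: 'n::finite tmat)"
  unfolding tone_monom
  by (intro ext, metis mult_mono_left[where p=id] id_apply inj_on_id add.left_neutral zero_ereal_def)

lemma tone_right: "\<forall>i j. A i j \<noteq> \<infinity> \<Longrightarrow> tmult A tone = (A :: 'n::finite tmat)"
  unfolding tone_monom
  by (intro ext, simp add: mult_mono_right zero_ereal_def[symmetric])

lemma tone_fin: "tone i j \<noteq> \<infinity>" by (simp add: tone_def)

lemma monoid_t: "monoid (tmonoid :: 'n::finite tmat monoid)"
  by (rule monoidI) (auto simp: tmonoid_def tone_def[symmetric] tmult_closed tmult_assoc tone_left tone_right tone_fin)

lemma carrier_t: "carrier tmonoid = {A. \<forall>i j. A i j \<noteq> \<infinity>}" by (simp add: tmonoid_def)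
lemma mult_t: "mult tmonoid = tmult" by (simp add: tmonoid_def)
lemma one_t: "one tmonoid = tone" by (simp add: tmonoid_def)


lemma ereal_sum_minf: "(a::ereal) \<noteq> \<infinity> \<Longrightarrow> b \<noteq> \<infinity> \<Longrightarrow> (a + b = -\<infinity>) = (a = -\<infinity> \<or> b = -\<infinity>)"
  by (cases a; cases b) auto

lemma le_tmult: "A i k + B k j \<le> tmult A B i (j::'n::finite)"
  unfolding tmult_def by (rule Max_ge) auto

lemma tmult_attained: "\<exists>k. tmult A B i j = A i k + B k (j::'n::finite)"
proof -
  have "tmult A B i j \<in> range (\<lambda>k. A i k + B k j)"
    unfolding tmult_def by (rule Max_in) auto
  then show ?thesis by auto
qed

lemma units_monom:
  fixes G :: "'n::finite tmat"
  assumes "G \<in> Units tmonoid"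
  shows "\<exists>p d. bij p \<and> G = monom p d"
proof -
  from assms obtain H where GC: "\<forall>i j. G i j \<noteq> \<infinity>" and HC: "\<forall>i j. H i j \<noteq> \<infinity>"
    and HG: "tmult H G = tone" and GH: "tmult G H = tone"
    by (auto simp: Units_def carrier_t mult_t one_t)
  have ex: "\<exists>k. H i k \<noteq> -\<infinity> \<and> G k i \<noteq> -\<infinity>" for i
  proof -
    obtain k where "tmult H G i i = H i k + G k i" using tmult_attained by blast
    then have "H i k + G k i = 0" using HG by (simp add: tone_def)
    then have "H i k + G k i \<noteq> -\<infinity>" by simp
    then show ?thesis using ereal_sum_minf GC HC by blast
  qed
  define g where "g i = (SOME k. H i k \<noteq> -\<infinity> \<and> G k i \<noteq> -\<infinity>)" for i
  have g: "H i (g i) \<noteq> -\<infinity> \<and> G (g i) i \<noteq> -\<infinity>" for i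
    unfolding g_def by (rule someI_ex[OF ex])
  have Hz: "H j (g i) = -\<infinity>" if "j \<noteq> i" for i j
  proof -
    have "H j (g i) + G (g i) i \<le> tmult H G j i" by (rule le_tmult)
    then have "H j (g i) + G (g i) i = -\<infinity>" using HG that by (simp add: tone_def)
    then show ?thesis using g[of i] GC HC ereal_sum_minf by blast
  qed
  have "inj g"
  proof (rule injI)
    fix i j assume "g i = g j"
    then show "i = j" using g[of i] Hz[of i j] by auto
  qed
  then have bg: "bij g" by (simp add: bij_def finite_UNIV_inj_surj)
  have Gz: "G a i = -\<infinity>" if "a \<noteq> g i" for a i
  proof -
    have "G a i + H i (g i) \<le> tmult G H a (g i)" by (rule le_tmult)
    then have "G a i + H i (g i) = -\<infinity>" using GH that by (simp add: tone_def)
    then show ?thesis using g[of i] GC HC ereal_sum_minf by blast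
  qed
  have "G = monom g (\<lambda>i. real_of_ereal (G (g i) i))"
  proof (intro ext)
    fix a i show "G a i = monom g (\<lambda>i. real_of_ereal (G (g i) i)) a i"
      using Gz[of a i] g[of i] GC by (cases "G (g i) i") (auto simp: monom_def)
  qed
  with bg show ?thesis by blast
qed

lemma monom_carrier: "monom p d \<in> carrier tmonoid"
  by (auto simp: carrier_t monom_def)

lemma monom_units:
  fixes p :: "'n::finite \<Rightarrow> 'n"
  assumes "bij p"
  shows "monom p d \<in> Units tmonoid"
proof -
  let ?Q = "monom (inv_into UNIV p) (\<lambda>b. - d (inv_into UNIV p b))"
  have e1: "p \<circ> inv_into UNIV p = id" using assms bij_is_surj surj_iff by blast
  have e2: "inv_into UNIV p \<circ> p = id" using assms bij_is_inj inj_iff by blast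
  have "tmult (monom p d) ?Q = tone"
    unfolding mono_mult tone_monom e1 by simp
  moreover have "tmult ?Q (monom p d) = tone"
    unfolding mono_mult tone_monom e2 using assms by (simp add: bij_is_inj)
  ultimately show ?thesis using monom_carrier
    by (auto simp: Units_def mult_t one_t)
qed


lemma funpow_order:
  fixes p :: "'n::finite \<Rightarrow> 'n"
  assumes "bij p"
  shows "\<exists>K>0. p^^K = id"
proof -
  have "\<not> inj (\<lambda>t::nat. p^^t)"
  proof
    assume "inj (\<lambda>t::nat. p^^t)"
    moreover have "finite (range (\<lambda>t::nat. p^^t))" by simp
    ultimately have "finite (UNIV :: nat set)" using finite_imageD by blast
    then show False by simp
  qed
  then obtain t1 t2 :: nat where ne: "t1 \<noteq> t2" and eq: "p^^t1 = p^^t2"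
    unfolding inj_def by blast
  have main: "p^^(b - a) = id" if "a < b" "p^^a = p^^b" for a b
  proof
    fix x
    have "(p^^a) ((p^^(b-a)) x) = (p^^b) x"
      using that by (metis add_diff_inverse_nat comp_apply funpow_add less_imp_le_nat not_le)
    also have "\<dots> = (p^^a) x" using that by simp
    finally show "(p^^(b-a)) x = id x"
      using inj_fn[OF bij_is_inj[OF assms], of a] by (simp add: inj_eq)
  qed
  show ?thesis
  proof (cases "t1 < t2")
    case True then show ?thesis using main[OF True eq] by (intro exI[of _ "t2 - t1"]) auto
  next
    case False then have "t2 < t1" using ne by simp
    then show ?thesis using main[OF \<open>t2 < t1\<close> eq[symmetric]] by (intro exI[of _ "t1 - t2"]) auto
  qed
qed

definition Psum :: "('n \<Rightarrow> 'n) \<Rightarrow> ('n \<Rightarrow> real) \<Rightarrow> 'n \<Rightarrow> nat \<Rightarrow> real" where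
  "Psum p d x t = (\<Sum>s<t. d ((p^^s) x))"

lemma Psum_0[simp]: "Psum p d x 0 = 0"
  by (simp add: Psum_def)

lemma Psum_Suc: "Psum p d x (Suc t) = Psum p d x t + d ((p^^t) x)"
  by (simp add: Psum_def)

lemma Psum_shift: "Psum p d (p x) t = Psum p d x (Suc t) - d x"
  unfolding Psum_def sum.lessThan_Suc_shift by (simp add: funpow_swap1)

lemma iter_rel:
  assumes CR: "\<And>b c. e (p c) (p b) = e c b + d c - d b"
  shows "e ((p^^t) c) ((p^^t) b) = e c b + Psum p d c t - Psum p d b t"
  by (induction t) (simp_all add: Psum_Suc CR)

lemma sum_funpow:
  fixes p :: "'n::finite \<Rightarrow> 'n"
  assumes "bij p"
  shows "(\<Sum>b\<in>UNIV. d ((p^^s) b)) = (\<Sum>b\<in>UNIV. d b)"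
  by (rule sum.reindex_bij_betw) (use bij_fn[OF assms] in \<open>simp add: bij_betw_def bij_def\<close>)

lemma cycle_sums:
  fixes p :: "'n::finite \<Rightarrow> 'n"
  assumes "bij p" and CR: "\<And>b c. e (p c) (p b) = e c b + d c - d b"
    and K: "K > 0" "p^^K = id"
  shows "Psum p d b K = real K * (\<Sum>x\<in>UNIV. d x) / real CARD('n)"
proof -
  have eq: "Psum p d c K = Psum p d b K" for c
    using iter_rel[of e p d K c b, OF CR] K by simp
  have "(\<Sum>c\<in>UNIV. Psum p d c K) = (\<Sum>s<K. \<Sum>c\<in>UNIV. d ((p^^s) c))"
    unfolding Psum_def by (rule sum.swap)
  also have "\<dots> = real K * (\<Sum>x\<in>UNIV. d x)"
  proof -
    have "\<And>s. (\<Sum>c\<in>UNIV. d ((p^^s) c)) = sum d UNIV" using sum_funpow[OF assms(1)] by blast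
    then show ?thesis by simp
  qed
  moreover have "(\<Sum>c\<in>UNIV. Psum p d c K) = (\<Sum>c\<in>(UNIV::'n set). Psum p d b K)"
    using eq by (intro sum.cong refl) blast
  moreover have "(\<Sum>c\<in>(UNIV::'n set). Psum p d b K) = real CARD('n) * Psum p d b K"
    by simp
  ultimately have "real CARD('n) * Psum p d b K = real K * (\<Sum>x\<in>UNIV. d x)"
    by simp
  then show ?thesis by (simp add: field_simps)
qed


lemma tmultv_monom:
  fixes p :: "'n::finite \<Rightarrow> 'n"
  assumes "bij p" "\<forall>i. x i \<noteq> \<infinity>"
  shows "tmultv (monom p d) x (p b) = ereal (d b) + x b"
  unfolding tmultv_def
  apply (subst Max_single[where kk=b])
  using assms by (auto simp: monom_def bij_is_inj inj_eq)

lemma eig_suff: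
  fixes p :: "'n::finite \<Rightarrow> 'n"
  assumes "bij p" "K > 0" "\<forall>b. Psum p d b K = real K * \<mu>"
  shows "trop_eigenvalue (monom p d) \<mu>"
proof -
  define S where "S b = (\<Sum>t<K. Psum p d b t)" for b
  define x where "x b = ereal (- S b / real K)" for b
  have S_shift: "S (p b) = S b + real K * \<mu> - real K * d b" for b
  proof -
    have "S (p b) = (\<Sum>t<K. Psum p d b (Suc t) - d b)"
      unfolding S_def Psum_shift by simp
    also have "\<dots> = (\<Sum>t<K. Psum p d b (Suc t) - Psum p d b t) + S b - real K * d b"
      unfolding S_def by (simp add: sum_subtractf)
    also have "\<dots> = S b + real K * \<mu> - real K * d b"
      using assms(3) by (simp add: sum_lessThan_telescope)
    finally show ?thesis .
  qed
  have rel: "ereal (d b) + x b = ereal \<mu> + x (p b)" for b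
  proof -
    have "d b + - S b / real K = \<mu> + - S (p b) / real K"
      unfolding S_shift using assms(2) by (simp add: field_simps)
    then show ?thesis by (simp add: x_def)
  qed
  have "tmultv (monom p d) x = (\<lambda>i. ereal \<mu> + x i)"
  proof
    fix i
    obtain b where i: "i = p b" using assms(1) by (metis bij_pointE)
    show "tmultv (monom p d) x i = ereal \<mu> + x i"
      unfolding i using tmultv_monom[OF assms(1)] rel by (simp add: x_def)
  qed
  then show ?thesis unfolding trop_eigenvalue_def
    by (intro exI[of _ x]) (auto simp: x_def)
qed

lemma eig_nec:
  fixes p :: "'n::finite \<Rightarrow> 'n"
  assumes "bij p" "K > 0" "p^^K = id" "trop_eigenvalue (monom p d) \<mu>"
  shows "\<exists>b. Psum p d b K = real K * \<mu>"
proof -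
  obtain x b0 where xf: "\<forall>i. x i \<noteq> \<infinity>" and b0: "x b0 \<noteq> -\<infinity>"
    and ev: "tmultv (monom p d) x = (\<lambda>i. ereal \<mu> + x i)"
    using assms(4) unfolding trop_eigenvalue_def by blast
  have rel: "ereal (d b) + x b = ereal \<mu> + x (p b)" for b
    using tmultv_monom[OF assms(1) xf, of d b] ev by metis
  have fin: "x ((p^^s) b0) \<noteq> -\<infinity>" for s
  proof (induction s)
    case 0 then show ?case using b0 by simp
  next
    case (Suc s)
    show ?case
    proof
      assume "x ((p^^Suc s) b0) = -\<infinity>"
      then have "ereal (d ((p^^s) b0)) + x ((p^^s) b0) = -\<infinity>" using rel[of "(p^^s) b0"] by simp
      then show False using Suc xf by (cases "x ((p^^s) b0)") auto
    qed
  qed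
  define y where "y s = real_of_ereal (x ((p^^s) b0))" for s
  have xy: "x ((p^^s) b0) = ereal (y s)" for s
    using fin[of s] xf unfolding y_def by (cases "x ((p^^s) b0)") auto
  have ry: "d ((p^^s) b0) = \<mu> + (y (Suc s) - y s)" for s
  proof -
    have "ereal (d ((p^^s) b0)) + ereal (y s) = ereal \<mu> + ereal (y (Suc s))"
      using rel[of "(p^^s) b0"] xy[of s] xy[of "Suc s"] by simp
    then show ?thesis by simp
  qed
  have "Psum p d b0 K = (\<Sum>s<K. \<mu> + (y (Suc s) - y s))"
    unfolding Psum_def using ry by simp
  also have "\<dots> = real K * \<mu> + (y K - y 0)"
    by (simp add: sum.distrib sum_lessThan_telescope)
  also have "y K = y 0" unfolding y_def using assms(3) by simp
  finally show ?thesis by auto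
qed

lemma eig_char:
  fixes p :: "'n::finite \<Rightarrow> 'n"
  assumes "bij p" and CR: "\<And>b c. e (p c) (p b) = e c b + d c - d b"
  shows "trop_eigenvalue (monom p d) \<mu> \<longleftrightarrow> real CARD('n) * \<mu> = (\<Sum>x\<in>UNIV. d x)"
proof -
  obtain K where K: "K > 0" "p^^K = id" using funpow_order[OF assms(1)] by blast
  note cs = cycle_sums[of p e d, OF assms(1) CR K]
  show ?thesis
  proof
    assume "trop_eigenvalue (monom p d) \<mu>"
    then obtain b where "Psum p d b K = real K * \<mu>" using eig_nec[OF assms(1) K] by blast
    then have "real K * \<mu> = real K * (\<Sum>x\<in>UNIV. d x) / real CARD('n)" using cs by simp
    then show "real CARD('n) * \<mu> = (\<Sum>x\<in>UNIV. d x)" using K(1) by (simp add: field_simps)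
  next
    assume h: "real CARD('n) * \<mu> = (\<Sum>x\<in>UNIV. d x)"
    have "\<forall>b. Psum p d b K = real K * \<mu>" using cs h[symmetric] by simp
    then show "trop_eigenvalue (monom p d) \<mu>" by (rule eig_suff[OF assms(1) K(1)])
  qed
qed


definition tr :: "'n::finite tmat \<Rightarrow> real" where
  "tr G = (\<Sum>b\<in>UNIV. real_of_ereal (Max (range (\<lambda>a. G a b))))"

definition perm :: "'n tmat \<Rightarrow> 'n \<Rightarrow> 'n" where
  "perm G = (\<lambda>b. THE a. G a b \<noteq> -\<infinity>)"

lemma tr_monom: "tr (monom p d) = (\<Sum>b\<in>UNIV. d b)"
proof -
  have "Max (range (\<lambda>a. monom p d a b)) = ereal (d b)" for b
    by (subst Max_single[where kk="p b"]) (auto simp: monom_def)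
  then show ?thesis by (simp add: tr_def)
qed

lemma perm_monom: "perm (monom p d) = p"
  by (auto simp: perm_def monom_def)

lemma tr_mult:
  fixes q :: "'n::finite \<Rightarrow> 'n"
  assumes "bij q"
  shows "tr (tmult (monom p d) (monom q e)) = tr (monom p d) + tr (monom q e)"
proof -
  have "(\<Sum>b\<in>UNIV. d (q b)) = (\<Sum>b\<in>UNIV. d b)"
    by (rule sum.reindex_bij_betw) (use assms in \<open>simp add: bij_betw_def bij_def\<close>)
  then show ?thesis by (simp add: mono_mult tr_monom sum.distrib)
qed

lemma scal_comm:
  fixes A :: "'n::finite tmat"
  assumes "A \<in> carrier tmonoid"
  shows "tmult (monom id (\<lambda>_. l)) A = tmult A (monom id (\<lambda>_. l))"
proof (intro ext)
  fix a b
  have A: "\<forall>i j. A i j \<noteq> \<infinity>" using assms by (simp add: carrier_t)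
  have "tmult (monom id (\<lambda>_. l)) A (id a) b = ereal l + A a b"
    by (rule mult_mono_left[OF A]) simp
  moreover have "tmult A (monom id (\<lambda>_. l)) a b = A a b + ereal l"
    using mult_mono_right[OF A] by simp
  ultimately show "tmult (monom id (\<lambda>_. l)) A a b = tmult A (monom id (\<lambda>_. l)) a b"
    by (simp add: add.commute)
qed

lemma tscal_tone: "tscal l tone = monom id (\<lambda>_. l)"
  by (intro ext) (auto simp: tscal_def tone_def monom_def)

lemma comm_CR:
  fixes E :: "'n::finite tmat" and p :: "'n \<Rightarrow> 'n"
  assumes "finite_tmat E" "bij p" "tmult (monom p d) E = tmult E (monom p d)"
  shows "real_of_ereal (E (p c) (p b)) = real_of_ereal (E c b) + d c - d b"
proof -
  have EC: "\<forall>i j. E i j \<noteq> \<infinity>" using assms(1) unfolding finite_tmat_def by (metis abs_ereal.simps(3))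
  have Ee: "E i j = ereal (real_of_ereal (E i j))" for i j
    using assms(1) unfolding finite_tmat_def by (metis ereal_real)
  have "ereal (d c) + E c b = E (p c) (p b) + ereal (d b)"
    using mult_mono_left[OF EC bij_is_inj[OF assms(2)], of d c b]
      mult_mono_right[OF EC, of p d "p c" b] assms(3) by simp
  then have "ereal (d c + real_of_ereal (E c b)) = ereal (real_of_ereal (E (p c) (p b)) + d b)"
    by (subst (asm) Ee[of c b], subst (asm) Ee[of "p c" "p b"]) simp
  then show ?thesis by simp
qed

lemma GE_rep:
  fixes E G :: "'n::finite tmat"
  assumes "finite_tmat E" "G \<in> Units tmonoid" "tmult G E = tmult E G"
  obtains p d where "bij p" "G = monom p d"
    "\<And>b c. real_of_ereal (E (p c) (p b)) = real_of_ereal (E c b) + d c - d b"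
proof -
  obtain p d where "bij p" "G = monom p d" using units_monom[OF assms(2)] by blast
  with comm_CR[OF assms(1) \<open>bij p\<close>, of d] assms(3) that show ?thesis by blast
qed

lemma GE_ev:
  fixes E G :: "'n::finite tmat"
  assumes "finite_tmat E" "G \<in> Units tmonoid" "tmult G E = tmult E G"
  shows "trop_eigenvalue G \<mu> \<longleftrightarrow> real CARD('n) * \<mu> = tr G"
proof -
  obtain p d where "bij p" "G = monom p d"
    and CR: "\<And>b c. real_of_ereal (E (p c) (p b)) = real_of_ereal (E c b) + d c - d b"
    using GE_rep[OF assms] by blast
  then show ?thesis using eig_char[of p "\<lambda>i j. real_of_ereal (E i j)" d \<mu>] CR
    by (simp add: tr_monom)
qed


theorem theorem7p8:
  fixes E :: "'n::finite tmat"
    and GE R Sigma :: "'n tmat set"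
  assumes "finite_tmat E"
    and "tmult E E = E"
    and "trop_rank E = CARD('n)"
    and "GE = {G \<in> Units tmonoid. tmult G E = tmult E G}"
    and "R = {tscal l tone | l. True}"
    and "Sigma = {G \<in> GE. trop_eigenvalue G 0}"
  shows "group (tmonoid\<lparr>carrier := GE\<rparr>)
    \<and> subgroup R (tmonoid\<lparr>carrier := GE\<rparr>)
    \<and> subgroup Sigma (tmonoid\<lparr>carrier := GE\<rparr>)
    \<and> tmonoid\<lparr>carrier := R\<rparr> \<cong> real_add_group
    \<and> finite Sigma
    \<and> (\<exists>h. h \<in> hom (tmonoid\<lparr>carrier := Sigma\<rparr>) (BijGroup (UNIV :: 'n set)) \<and> inj_on h Sigma)
    \<and> (\<lambda>(r, s). tmult r s) \<in> iso (tmonoid\<lparr>carrier := R\<rparr> \<times>\<times> tmonoid\<lparr>carrier := Sigma\<rparr>)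
                                   (tmonoid\<lparr>carrier := GE\<rparr>)"
proof -
  note fin = assms(1)
  have M: "monoid (tmonoid :: 'n tmat monoid)" by (rule monoid_t)
  have EC: "\<forall>i j. E i j \<noteq> \<infinity>" using fin unfolding finite_tmat_def by (metis abs_ereal.simps(3))
  have Ecar: "E \<in> carrier tmonoid" using EC by (simp add: carrier_t)
  have GE_iff: "G \<in> GE \<longleftrightarrow> G \<in> Units tmonoid \<and> tmult G E = tmult E G" for G
    using assms(4) by simp
  have GE_car: "G \<in> carrier tmonoid" if "G \<in> GE" for G
    using that GE_iff monoid.Units_closed[OF M] by blast
  have GEC: "\<forall>i j. G i j \<noteq> \<infinity>" if "G \<in> GE" for G
    using GE_car[OF that] by (simp add: carrier_t)
  have GE_m: "tmult G H \<in> GE" if "G \<in> GE" "H \<in> GE" for G H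
  proof -
    have "tmult G H \<in> Units tmonoid"
      using monoid.Units_m_closed[OF M, of G H] that GE_iff by (simp add: mult_t)
    moreover have "tmult (tmult G H) E = tmult E (tmult G H)"
      using that GE_iff by (metis tmult_assoc)
    ultimately show ?thesis using GE_iff by blast
  qed
  have GE_one: "tone \<in> GE"
    using monoid.Units_one_closed[OF M] GE_iff tone_left[OF EC] tone_right[OF EC]
    by (simp add: one_t)
  have GE_inv: "\<exists>J\<in>GE. tmult J G = tone \<and> tmult G J = tone" if "G \<in> GE" for G
  proof -
    define J where "J = inv\<^bsub>tmonoid\<^esub> G"
    have GU: "G \<in> Units tmonoid" and GEc: "tmult G E = tmult E G" using that GE_iff by auto
    have JU: "J \<in> Units tmonoid" unfolding J_def using monoid.Units_inv_Units[OF M GU] .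
    have JG: "tmult J G = tone" unfolding J_def using monoid.Units_l_inv[OF M GU] by (simp add: mult_t one_t)
    have GJ: "tmult G J = tone" unfolding J_def using monoid.Units_r_inv[OF M GU] by (simp add: mult_t one_t)
    have JC: "\<forall>i j. J i j \<noteq> \<infinity>" using monoid.Units_closed[OF M JU] by (simp add: carrier_t)
    have "tmult J E = tmult (tmult J E) (tmult G J)"
      using GJ tone_right[of "tmult J E"] tmult_closed[OF JC EC] by simp
    also have "\<dots> = tmult J (tmult (tmult E G) J)" by (simp add: tmult_assoc)
    also have "\<dots> = tmult J (tmult (tmult G E) J)" by (simp add: GEc)
    also have "\<dots> = tmult (tmult J G) (tmult E J)" by (simp add: tmult_assoc)
    also have "\<dots> = tmult E J" using JG tone_left[of "tmult E J"] tmult_closed[OF EC JC] by simp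
    finally have "J \<in> GE" using JU GE_iff by blast
    then show ?thesis using JG GJ by blast
  qed
  define \<Gamma> where "\<Gamma> = (tmonoid\<lparr>carrier := GE\<rparr>)"
  have \<Gamma>s: "carrier \<Gamma> = GE" "mult \<Gamma> = tmult" "one \<Gamma> = tone"
    by (simp_all add: \<Gamma>_def tmonoid_def)
  have grp: "group \<Gamma>"
  proof (rule groupI)
    show "x \<otimes>\<^bsub>\<Gamma>\<^esub> y \<in> carrier \<Gamma>" if "x \<in> carrier \<Gamma>" "y \<in> carrier \<Gamma>" for x y
      using that GE_m by (simp add: \<Gamma>s)
    show "\<one>\<^bsub>\<Gamma>\<^esub> \<in> carrier \<Gamma>" using GE_one by (simp add: \<Gamma>s)
    show "x \<otimes>\<^bsub>\<Gamma>\<^esub> y \<otimes>\<^bsub>\<Gamma>\<^esub> z = x \<otimes>\<^bsub>\<Gamma>\<^esub> (y \<otimes>\<^bsub>\<Gamma>\<^esub> z)" for x y z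
      by (simp add: \<Gamma>s tmult_assoc)
    show "\<one>\<^bsub>\<Gamma>\<^esub> \<otimes>\<^bsub>\<Gamma>\<^esub> x = x" if "x \<in> carrier \<Gamma>" for x
      using that tone_left[OF GEC[of x]] by (simp add: \<Gamma>s)
    show "\<exists>y\<in>carrier \<Gamma>. y \<otimes>\<^bsub>\<Gamma>\<^esub> x = \<one>\<^bsub>\<Gamma>\<^esub>" if "x \<in> carrier \<Gamma>" for x
      using that GE_inv by (simp add: \<Gamma>s) blast
  qed
  have inv\<Gamma>: "inv\<^bsub>\<Gamma>\<^esub> x = y" if "x \<in> GE" "y \<in> GE" "tmult y x = tone" for x y
    using group.inv_equality[OF grp, of y x] that by (simp add: \<Gamma>s)
  define sc :: "real \<Rightarrow> 'n tmat" where "sc l = monom id (\<lambda>_. l)" for l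
  have R_eq: "R = range sc" using assms(5) by (auto simp: sc_def tscal_tone)
  have sc_mult: "tmult (sc l) (sc m) = sc (l + m)" for l m
    by (simp add: sc_def mono_mult)
  have sc_0: "sc 0 = tone" by (simp add: sc_def tone_monom)
  have sc_GE: "sc l \<in> GE" for l
    using GE_iff monom_units[of id] scal_comm[OF Ecar] by (simp add: sc_def)
  have sc_comm: "tmult (sc l) A = tmult A (sc l)" if "A \<in> GE" for A l
    using scal_comm[OF GE_car[OF that]] by (simp add: sc_def)
  have GEU: "G \<in> Units tmonoid" if "G \<in> GE" for G using that GE_iff by blast
  have GErep: "\<exists>p d. bij p \<and> G = monom p d" if "G \<in> GE" for G
    by (rule units_monom[OF GEU[OF that]])
  have tr_sc: "tr (sc l) = real CARD('n) * l" for l by (simp add: sc_def tr_monom)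
  have tr_m: "tr (tmult G H) = tr G + tr H" if G: "G \<in> GE" and H: "H \<in> GE" for G H
  proof -
    obtain p d where "bij p" "G = monom p d" using GErep[OF G] by blast
    moreover obtain q e where "bij q" "H = monom q e" using GErep[OF H] by blast
    ultimately show ?thesis by (simp add: tr_mult)
  qed
  have tr_one: "tr (tone::'n tmat) = 0" by (simp add: tone_monom tr_monom)
  have ev: "trop_eigenvalue G \<mu> \<longleftrightarrow> real CARD('n) * \<mu> = tr G" if "G \<in> GE" for G \<mu>
    using GE_ev[OF fin] that GE_iff by blast
  have Sig_eq: "Sigma = {G \<in> GE. tr G = 0}" using assms(6) ev by auto
  have part1: "subgroup R \<Gamma>"
  proof
    show "R \<subseteq> carrier \<Gamma>" using sc_GE by (auto simp: R_eq \<Gamma>s)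
    show "x \<otimes>\<^bsub>\<Gamma>\<^esub> y \<in> R" if "x \<in> R" "y \<in> R" for x y
      using that sc_mult by (auto simp: R_eq \<Gamma>s)
    show "\<one>\<^bsub>\<Gamma>\<^esub> \<in> R" using sc_0 by (simp add: R_eq \<Gamma>s) (metis rangeI)
    show "inv\<^bsub>\<Gamma>\<^esub> x \<in> R" if xR: "x \<in> R" for x
    proof -
      obtain l where x: "x = sc l" using xR R_eq by auto
      have "inv\<^bsub>\<Gamma>\<^esub> x = sc (-l)" using inv\<Gamma>[OF sc_GE sc_GE] sc_mult sc_0 x by simp
      then show ?thesis by (simp add: R_eq)
    qed
  qed
  have part2: "subgroup Sigma \<Gamma>"
  proof
    show "Sigma \<subseteq> carrier \<Gamma>" by (auto simp: Sig_eq \<Gamma>s)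
    show "x \<otimes>\<^bsub>\<Gamma>\<^esub> y \<in> Sigma" if "x \<in> Sigma" "y \<in> Sigma" for x y
      using that tr_m GE_m by (auto simp: Sig_eq \<Gamma>s)
    show "\<one>\<^bsub>\<Gamma>\<^esub> \<in> Sigma" using GE_one tr_one by (auto simp: Sig_eq \<Gamma>s)
    show "inv\<^bsub>\<Gamma>\<^esub> x \<in> Sigma" if "x \<in> Sigma" for x
    proof -
      have xG: "x \<in> GE" and tx: "tr x = 0" using that by (auto simp: Sig_eq)
      obtain J where J: "J \<in> GE" "tmult J x = tone" using GE_inv[OF xG] by blast
      have "inv\<^bsub>\<Gamma>\<^esub> x = J" using inv\<Gamma>[OF xG J(1) J(2)] .
      moreover have "tr J = 0" using tr_m[OF J(1) xG] tr_one tx unfolding J(2) by linarith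
      ultimately show ?thesis using J(1) by (simp add: Sig_eq)
    qed
  qed
  have part3: "tmonoid\<lparr>carrier := R\<rparr> \<cong> real_add_group"
  proof -
    define h :: "'n tmat \<Rightarrow> real" where "h M = real_of_ereal (M undefined undefined)" for M
    have hsc: "h (sc l) = l" for l by (simp add: h_def sc_def monom_def)
    have "h \<in> iso (tmonoid\<lparr>carrier := R\<rparr>) real_add_group"
    proof -
      have "h \<in> hom (tmonoid\<lparr>carrier := R\<rparr>) real_add_group"
        by (rule homI) (auto simp: real_add_group_def tmonoid_def R_eq sc_mult hsc)
      moreover have "bij_betw h R UNIV"
        unfolding R_eq bij_betw_def
        by (auto simp: inj_on_def hsc image_iff)
      ultimately show ?thesis by (simp add: iso_def real_add_group_def)
    qed
    then show ?thesis unfolding is_iso_def by blast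
  qed
  have Sig_GE: "Sigma \<subseteq> GE" by (auto simp: Sig_eq)
  have perm_inj: "inj_on perm Sigma"
  proof
    fix G G' assume G: "G \<in> Sigma" and G': "G' \<in> Sigma" and pe: "perm G = perm G'"
    have GG: "G \<in> GE" "tr G = 0" "G' \<in> GE" "tr G' = 0" using G G' by (auto simp: Sig_eq)
    obtain p d where p: "bij p" "G = monom p d"
      and CR: "\<And>b c. real_of_ereal (E (p c) (p b)) = real_of_ereal (E c b) + d c - d b"
      using GE_rep[OF fin GEU[OF GG(1)]] GE_iff GG(1) by blast
    obtain p' d' where p': "bij p'" "G' = monom p' d'"
      and CR': "\<And>b c. real_of_ereal (E (p' c) (p' b)) = real_of_ereal (E c b) + d' c - d' b"
      using GE_rep[OF fin GEU[OF GG(3)]] GE_iff GG(3) by blast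
    have pp: "p' = p" using pe p p' by (simp add: perm_monom)
    define \<kappa> where "\<kappa> = d undefined - d' undefined"
    have dk: "d c = d' c + \<kappa>" for c
      using CR[of undefined c] CR'[of undefined c] unfolding pp \<kappa>_def by simp
    have "(\<Sum>c\<in>UNIV. d c) = (\<Sum>c\<in>UNIV. d' c) + real CARD('n) * \<kappa>"
      unfolding dk by (simp add: sum.distrib)
    moreover have "(\<Sum>c\<in>UNIV. d c) = 0" "(\<Sum>c\<in>UNIV. d' c) = 0"
      using GG p p' by (simp_all add: tr_monom)
    ultimately have "\<kappa> = 0" by simp
    then have "d = d'" using dk by auto
    then show "G = G'" using p p' pp by simp
  qed
  have part4: "finite Sigma"
  proof -
    have "finite (perm ` Sigma)" by simp
    then show ?thesis using finite_imageD perm_inj by blast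
  qed
  have part5: "perm \<in> hom (tmonoid\<lparr>carrier := Sigma\<rparr>) (BijGroup (UNIV :: 'n set))"
  proof (rule homI)
    fix G assume "G \<in> carrier (tmonoid\<lparr>carrier := Sigma\<rparr>)"
    then have "G \<in> GE" using Sig_GE by auto
    then obtain p d where "bij p" "G = monom p d" using GErep by blast
    then show "perm G \<in> carrier (BijGroup UNIV)"
      by (simp add: perm_monom BijGroup_def Bij_def)
  next
    fix G H assume "G \<in> carrier (tmonoid\<lparr>carrier := Sigma\<rparr>)" "H \<in> carrier (tmonoid\<lparr>carrier := Sigma\<rparr>)"
    then have "G \<in> GE" "H \<in> GE" using Sig_GE by auto
    then obtain p d q e where pq: "bij p" "G = monom p d" "bij q" "H = monom q e"
      using GErep by meson
    have "p \<in> Bij UNIV" "q \<in> Bij UNIV" using pq by (simp_all add: Bij_def)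
    then show "perm (G \<otimes>\<^bsub>tmonoid\<lparr>carrier := Sigma\<rparr>\<^esub> H) = perm G \<otimes>\<^bsub>BijGroup UNIV\<^esub> perm H"
      using pq by (simp add: tmonoid_def BijGroup_def mono_mult perm_monom compose_def restrict_def o_def)
  qed
  have part6: "(\<lambda>(r, s). tmult r s) \<in> iso (tmonoid\<lparr>carrier := R\<rparr> \<times>\<times> tmonoid\<lparr>carrier := Sigma\<rparr>)
                                   (tmonoid\<lparr>carrier := GE\<rparr>)"
  proof -
    have car: "carrier (tmonoid\<lparr>carrier := R\<rparr> \<times>\<times> tmonoid\<lparr>carrier := Sigma\<rparr>) = R \<times> Sigma"
      by (simp add: DirProd_def)
    have hom: "(\<lambda>(r, s). tmult r s) \<in> hom (tmonoid\<lparr>carrier := R\<rparr> \<times>\<times> tmonoid\<lparr>carrier := Sigma\<rparr>)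
                                   (tmonoid\<lparr>carrier := GE\<rparr>)"
    proof (rule homI)
      fix x assume "x \<in> carrier (tmonoid\<lparr>carrier := R\<rparr> \<times>\<times> tmonoid\<lparr>carrier := Sigma\<rparr>)"
      then obtain l s where x: "x = (sc l, s)" "s \<in> Sigma" using car R_eq by auto
      then show "(\<lambda>(r, s). tmult r s) x \<in> carrier (tmonoid\<lparr>carrier := GE\<rparr>)"
        using GE_m sc_GE Sig_GE by auto
    next
      fix x y assume "x \<in> carrier (tmonoid\<lparr>carrier := R\<rparr> \<times>\<times> tmonoid\<lparr>carrier := Sigma\<rparr>)"
        "y \<in> carrier (tmonoid\<lparr>carrier := R\<rparr> \<times>\<times> tmonoid\<lparr>carrier := Sigma\<rparr>)"
      then obtain l s m t where x: "x = (sc l, s)" "s \<in> Sigma" and y: "y = (sc m, t)" "t \<in> Sigma"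
        using car R_eq by auto
      have "tmult (tmult (sc l) (sc m)) (tmult s t) = tmult (sc l) (tmult (tmult (sc m) s) t)"
        by (simp add: tmult_assoc)
      also have "\<dots> = tmult (sc l) (tmult (tmult s (sc m)) t)"
        using sc_comm[of s m] x Sig_GE by auto
      also have "\<dots> = tmult (tmult (sc l) s) (tmult (sc m) t)" by (simp add: tmult_assoc)
      finally show "(\<lambda>(r, s). tmult r s) (x \<otimes>\<^bsub>tmonoid\<lparr>carrier := R\<rparr> \<times>\<times> tmonoid\<lparr>carrier := Sigma\<rparr>\<^esub> y) =
          (\<lambda>(r, s). tmult r s) x \<otimes>\<^bsub>tmonoid\<lparr>carrier := GE\<rparr>\<^esub> (\<lambda>(r, s). tmult r s) y"
        using x y by (simp add: DirProd_def tmonoid_def)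
    qed
    have canc: "tmult (sc (-l)) (tmult (sc l) s) = s" if "s \<in> GE" for l s
      using GEC[OF that] by (simp add: tmult_assoc[symmetric] sc_mult sc_0 tone_left)
    have inj: "inj_on (\<lambda>(r, s). tmult r s) (R \<times> Sigma)"
    proof
      fix x y assume "x \<in> R \<times> Sigma" "y \<in> R \<times> Sigma" and eq: "(\<lambda>(r, s). tmult r s) x = (\<lambda>(r, s). tmult r s) y"
      then obtain l s m t where x: "x = (sc l, s)" "s \<in> GE" "tr s = 0" and y: "y = (sc m, t)" "t \<in> GE" "tr t = 0"
        using R_eq by (auto simp: Sig_eq)
      have e: "tmult (sc l) s = tmult (sc m) t" using eq x y by simp
      have "tr (tmult (sc l) s) = tr (tmult (sc m) t)" using e by simp
      moreover have "tr (tmult (sc l) s) = real CARD('n) * l" using tr_m[OF sc_GE x(2)] x(3) tr_sc by simp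
      moreover have "tr (tmult (sc m) t) = real CARD('n) * m" using tr_m[OF sc_GE y(2)] y(3) tr_sc by simp
      ultimately have "real CARD('n) * l = real CARD('n) * m" by simp
      then have lm: "l = m" by simp
      have "s = t" using canc[OF x(2), of l] canc[OF y(2), of m] e lm by metis
      then show "x = y" using x y lm by simp
    qed
    have surj: "(\<lambda>(r, s). tmult r s) ` (R \<times> Sigma) = GE"
    proof
      show "(\<lambda>(r, s). tmult r s) ` (R \<times> Sigma) \<subseteq> GE"
        using GE_m sc_GE Sig_GE R_eq by auto
      show "GE \<subseteq> (\<lambda>(r, s). tmult r s) ` (R \<times> Sigma)"
      proof
        fix G assume G: "G \<in> GE"
        define l where "l = tr G / real CARD('n)"
        define s where "s = tmult (sc (-l)) G"
        have sG: "s \<in> GE" unfolding s_def using GE_m[OF sc_GE G] .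
        have "tr s = 0" unfolding s_def using tr_m[OF sc_GE G] tr_sc by (simp add: l_def)
        then have "s \<in> Sigma" using sG by (simp add: Sig_eq)
        moreover have "tmult (sc l) s = G"
          using canc[OF G, of "-l"] unfolding s_def by simp
        ultimately show "G \<in> (\<lambda>(r, s). tmult r s) ` (R \<times> Sigma)"
          using R_eq by (auto intro!: image_eqI[of _ _ "(sc l, s)"])
      qed
    qed
    show ?thesis using hom inj surj car by (simp add: iso_def bij_betw_def)
  qed
  show ?thesis
    using grp part1 part2 part3 part4 part5 perm_inj part6 unfolding \<Gamma>_def by blast
qed

end
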